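(* Let $t\ge 4$ and let $K_{t,t}^{-}$ be the graph obtained from the complete bipartite graph $K_{t,t}$ by removing one edge. In a Waiter-Client game, by offering edges of $K_{t,t}^-$ only, Waiter can force a red perfect matching of $K_{t,t}^{-}$ within $t+1$ rounds.
   Context: Waiter-Client game: in each round Waiter offers two free edges of the board, Client colors one of them red and the other becomes blue. *)

theory Defs
  imports Main
begin

text \<open>In each round
Waiter offers two distinct free edges of the board (free = neither red nor blue);
Client colours one of them red, the other one becomes blue.
\<open>waiter_forces board goal n R B\<close>: starting from red set R and blue set B,
Waiter can guarantee that the red set satisfies \<open>goal\<close> after at most n more
rounds, whatever Client does.\<close>

fun waiter_forces ::
  "'e set \<Rightarrow> ('e set \<Rightarrow> bool) \<Rightarrow> nat \<Rightarrow> 'e set \<Rightarrow> 'e set \<Rightarrow> bool" where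
  "waiter_forces board goal 0 R B = goal R"
| "waiter_forces board goal (Suc n) R B =
     (goal R \<or>
      (\<exists>e1 e2. e1 \<in> board \<and> e2 \<in> board \<and> e1 \<noteq> e2 \<and>
         e1 \<notin> R \<union> B \<and> e2 \<notin> R \<union> B \<and>
         waiter_forces board goal n (insert e1 R) (insert e2 B) \<and>
         waiter_forces board goal n (insert e2 R) (insert e1 B)))"

text \<open>The bipartite graph K_{t,t}: left vertices 0..t-1, right vertices 0..t-1;
the edge (i,j) joins left vertex i with right vertex j.  K_{t,t}^- is obtained
by removing the edge (0,0).\<close>

definition Ktt_minus :: "nat \<Rightarrow> (nat \<times> nat) set" where
  "Ktt_minus t = {(i, j). i < t \<and> j < t \<and> (i, j) \<noteq> (0, 0)}"

definition perfect_matching :: "nat \<Rightarrow> (nat \<times> nat) set \<Rightarrow> (nat \<times> nat) set \<Rightarrow> bool" where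
  "perfect_matching t G M \<longleftrightarrow> M \<subseteq> G \<and>
     (\<forall>i<t. \<exists>!j. (i, j) \<in> M) \<and> (\<forall>j<t. \<exists>!i. (i, j) \<in> M)"

end

theory Submission
  imports Defs
begin

lemma stepI:
  assumes "e1 \<in> board \<and> e2 \<in> board \<and> e1 \<noteq> e2 \<and> e1 \<notin> R \<and> e1 \<notin> B \<and> e2 \<notin> R \<and> e2 \<notin> B"
    and "waiter_forces board goal n (insert e1 R) (insert e2 B)"
    and "waiter_forces board goal n (insert e2 R) (insert e1 B)"
  shows "waiter_forces board goal (Suc n) R B"
  using assms by auto

lemma leafI:
  assumes "goal S" "S \<subseteq> R" "\<forall>S T. S \<subseteq> T \<longrightarrow> goal S \<longrightarrow> goal T"
  shows "waiter_forces board goal n R B"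
  using assms by (cases n) auto

definition pmXY :: "nat set \<Rightarrow> nat set \<Rightarrow> (nat \<times> nat) set \<Rightarrow> bool" where
  "pmXY X Y M \<longleftrightarrow> M \<subseteq> (X \<times> Y) - {(0, 0)} \<and>
     (\<forall>x\<in>X. \<exists>!y. (x, y) \<in> M) \<and> (\<forall>y\<in>Y. \<exists>!x. (x, y) \<in> M)"

lemma pm4:
  assumes "distinct [x0, x1, x2, x3]" "distinct [y0, y1, y2, y3]"
    and "(x0, y0) \<noteq> (0, 0)" "(x1, y1) \<noteq> (0, 0)" "(x2, y2) \<noteq> (0, 0)" "(x3, y3) \<noteq> (0, 0)"
    and "Y = {y0, y1, y2, y3}"
  shows "pmXY {x0, x1, x2, x3} Y {(x0, y0), (x1, y1), (x2, y2), (x3, y3)}"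
  using assms unfolding pmXY_def by auto

lemma base:
  assumes dist: "distinct [0, l1, l2, l3]" "distinct [0, r1, r2, r3]"
    and brd: "\<forall>x\<in>{0, l1, l2, l3}. \<forall>y\<in>{0, r1, r2, r3}. (x, y) \<noteq> (0, 0) \<longrightarrow> (x, y) \<in> board"
    and fr: "\<forall>x\<in>{0, l1, l2, l3}. \<forall>y\<in>{0, r1, r2, r3}. (x, y) \<notin> R0 \<and> (x, y) \<notin> B0"
    and mono: "\<forall>S T. S \<subseteq> T \<longrightarrow> goal S \<longrightarrow> goal T"
    and Hm: "\<And>M. pmXY {0, l1, l2, l3} {0, r1, r2, r3} M \<Longrightarrow> goal (R0 \<union> M)"
  shows "waiter_forces board goal (Suc (Suc (Suc (Suc (Suc k))))) R0 B0"
  apply (rule stepI[where ?e1.0="(0, r1)" and ?e2.0="(0, r2)"])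
   subgoal using brd fr dist by simp
   apply (rule stepI[where ?e1.0="(0, r3)" and ?e2.0="(l1, 0)"])
    subgoal using brd fr dist by simp
    apply (rule stepI[where ?e1.0="(l2, 0)" and ?e2.0="(l3, 0)"])
     subgoal using brd fr dist by simp
     apply (rule stepI[where ?e1.0="(l1, r2)" and ?e2.0="(l3, r2)"])
      subgoal using brd fr dist by simp
      apply (rule stepI[where ?e1.0="(l3, r1)" and ?e2.0="(l3, r3)"])
       subgoal using brd fr dist by simp
       apply (rule leafI[where S="R0 \<union> {(0, r3), (l1, r2), (l2, 0), (l3, r1)}"])
          apply (rule Hm) subgoal by (rule pm4) (use dist in auto)
         subgoal by blast
        apply (rule mono)
       apply (rule leafI[where S="R0 \<union> {(0, r1), (l1, r2), (l2, 0), (l3, r3)}"])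
          apply (rule Hm) subgoal by (rule pm4) (use dist in auto)
         subgoal by blast
        apply (rule mono)
      apply (rule stepI[where ?e1.0="(l1, r1)" and ?e2.0="(l1, r3)"])
       subgoal using brd fr dist by simp
       apply (rule leafI[where S="R0 \<union> {(0, r3), (l1, r1), (l2, 0), (l3, r2)}"])
          apply (rule Hm) subgoal by (rule pm4) (use dist in auto)
         subgoal by blast
        apply (rule mono)
       apply (rule leafI[where S="R0 \<union> {(0, r1), (l1, r3), (l2, 0), (l3, r2)}"])
          apply (rule Hm) subgoal by (rule pm4) (use dist in auto)
         subgoal by blast
        apply (rule mono)
     apply (rule stepI[where ?e1.0="(l1, r2)" and ?e2.0="(l2, r2)"])
      subgoal using brd fr dist by simp
      apply (rule stepI[where ?e1.0="(l2, r1)" and ?e2.0="(l2, r3)"])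
       subgoal using brd fr dist by simp
       apply (rule leafI[where S="R0 \<union> {(0, r3), (l1, r2), (l2, r1), (l3, 0)}"])
          apply (rule Hm) subgoal by (rule pm4) (use dist in auto)
         subgoal by blast
        apply (rule mono)
       apply (rule leafI[where S="R0 \<union> {(0, r1), (l1, r2), (l2, r3), (l3, 0)}"])
          apply (rule Hm) subgoal by (rule pm4) (use dist in auto)
         subgoal by blast
        apply (rule mono)
      apply (rule stepI[where ?e1.0="(l1, r1)" and ?e2.0="(l1, r3)"])
       subgoal using brd fr dist by simp
       apply (rule leafI[where S="R0 \<union> {(0, r3), (l1, r1), (l2, r2), (l3, 0)}"])
          apply (rule Hm) subgoal by (rule pm4) (use dist in auto)
         subgoal by blast
        apply (rule mono)
       apply (rule leafI[where S="R0 \<union> {(0, r1), (l1, r3), (l2, r2), (l3, 0)}"])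
          apply (rule Hm) subgoal by (rule pm4) (use dist in auto)
         subgoal by blast
        apply (rule mono)
    apply (rule stepI[where ?e1.0="(l1, r2)" and ?e2.0="(l1, r3)"])
     subgoal using brd fr dist by simp
     apply (rule stepI[where ?e1.0="(l2, r3)" and ?e2.0="(l3, r3)"])
      subgoal using brd fr dist by simp
      apply (rule stepI[where ?e1.0="(l3, 0)" and ?e2.0="(l3, r2)"])
       subgoal using brd fr dist by simp
       apply (rule leafI[where S="R0 \<union> {(0, r1), (l1, r2), (l2, r3), (l3, 0)}"])
          apply (rule Hm) subgoal by (rule pm4) (use dist in auto)
         subgoal by blast
        apply (rule mono)
       apply (rule leafI[where S="R0 \<union> {(0, r1), (l1, 0), (l2, r3), (l3, r2)}"])
          apply (rule Hm) subgoal by (rule pm4) (use dist in auto)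
         subgoal by blast
        apply (rule mono)
      apply (rule stepI[where ?e1.0="(l2, 0)" and ?e2.0="(l2, r2)"])
       subgoal using brd fr dist by simp
       apply (rule leafI[where S="R0 \<union> {(0, r1), (l1, r2), (l2, 0), (l3, r3)}"])
          apply (rule Hm) subgoal by (rule pm4) (use dist in auto)
         subgoal by blast
        apply (rule mono)
       apply (rule leafI[where S="R0 \<union> {(0, r1), (l1, 0), (l2, r2), (l3, r3)}"])
          apply (rule Hm) subgoal by (rule pm4) (use dist in auto)
         subgoal by blast
        apply (rule mono)
     apply (rule stepI[where ?e1.0="(l2, r2)" and ?e2.0="(l3, r2)"])
      subgoal using brd fr dist by simp
      apply (rule stepI[where ?e1.0="(l3, 0)" and ?e2.0="(l3, r3)"])
       subgoal using brd fr dist by simp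
       apply (rule leafI[where S="R0 \<union> {(0, r1), (l1, r3), (l2, r2), (l3, 0)}"])
          apply (rule Hm) subgoal by (rule pm4) (use dist in auto)
         subgoal by blast
        apply (rule mono)
       apply (rule leafI[where S="R0 \<union> {(0, r1), (l1, 0), (l2, r2), (l3, r3)}"])
          apply (rule Hm) subgoal by (rule pm4) (use dist in auto)
         subgoal by blast
        apply (rule mono)
      apply (rule stepI[where ?e1.0="(l2, 0)" and ?e2.0="(l2, r3)"])
       subgoal using brd fr dist by simp
       apply (rule leafI[where S="R0 \<union> {(0, r1), (l1, r3), (l2, 0), (l3, r2)}"])
          apply (rule Hm) subgoal by (rule pm4) (use dist in auto)
         subgoal by blast
        apply (rule mono)
       apply (rule leafI[where S="R0 \<union> {(0, r1), (l1, 0), (l2, r3), (l3, r2)}"])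
          apply (rule Hm) subgoal by (rule pm4) (use dist in auto)
         subgoal by blast
        apply (rule mono)
   apply (rule stepI[where ?e1.0="(0, r3)" and ?e2.0="(l1, 0)"])
    subgoal using brd fr dist by simp
    apply (rule stepI[where ?e1.0="(l2, 0)" and ?e2.0="(l3, 0)"])
     subgoal using brd fr dist by simp
     apply (rule stepI[where ?e1.0="(l1, r1)" and ?e2.0="(l3, r1)"])
      subgoal using brd fr dist by simp
      apply (rule stepI[where ?e1.0="(l3, r2)" and ?e2.0="(l3, r3)"])
       subgoal using brd fr dist by simp
       apply (rule leafI[where S="R0 \<union> {(0, r3), (l1, r1), (l2, 0), (l3, r2)}"])
          apply (rule Hm) subgoal by (rule pm4) (use dist in auto)
         subgoal by blast
        apply (rule mono)
       apply (rule leafI[where S="R0 \<union> {(0, r2), (l1, r1), (l2, 0), (l3, r3)}"])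
          apply (rule Hm) subgoal by (rule pm4) (use dist in auto)
         subgoal by blast
        apply (rule mono)
      apply (rule stepI[where ?e1.0="(l1, r2)" and ?e2.0="(l1, r3)"])
       subgoal using brd fr dist by simp
       apply (rule leafI[where S="R0 \<union> {(0, r3), (l1, r2), (l2, 0), (l3, r1)}"])
          apply (rule Hm) subgoal by (rule pm4) (use dist in auto)
         subgoal by blast
        apply (rule mono)
       apply (rule leafI[where S="R0 \<union> {(0, r2), (l1, r3), (l2, 0), (l3, r1)}"])
          apply (rule Hm) subgoal by (rule pm4) (use dist in auto)
         subgoal by blast
        apply (rule mono)
     apply (rule stepI[where ?e1.0="(l1, r1)" and ?e2.0="(l2, r1)"])
      subgoal using brd fr dist by simp
      apply (rule stepI[where ?e1.0="(l2, r2)" and ?e2.0="(l2, r3)"])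
       subgoal using brd fr dist by simp
       apply (rule leafI[where S="R0 \<union> {(0, r3), (l1, r1), (l2, r2), (l3, 0)}"])
          apply (rule Hm) subgoal by (rule pm4) (use dist in auto)
         subgoal by blast
        apply (rule mono)
       apply (rule leafI[where S="R0 \<union> {(0, r2), (l1, r1), (l2, r3), (l3, 0)}"])
          apply (rule Hm) subgoal by (rule pm4) (use dist in auto)
         subgoal by blast
        apply (rule mono)
      apply (rule stepI[where ?e1.0="(l1, r2)" and ?e2.0="(l1, r3)"])
       subgoal using brd fr dist by simp
       apply (rule leafI[where S="R0 \<union> {(0, r3), (l1, r2), (l2, r1), (l3, 0)}"])
          apply (rule Hm) subgoal by (rule pm4) (use dist in auto)
         subgoal by blast
        apply (rule mono)
       apply (rule leafI[where S="R0 \<union> {(0, r2), (l1, r3), (l2, r1), (l3, 0)}"])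
          apply (rule Hm) subgoal by (rule pm4) (use dist in auto)
         subgoal by blast
        apply (rule mono)
    apply (rule stepI[where ?e1.0="(l1, r1)" and ?e2.0="(l1, r3)"])
     subgoal using brd fr dist by simp
     apply (rule stepI[where ?e1.0="(l2, r3)" and ?e2.0="(l3, r3)"])
      subgoal using brd fr dist by simp
      apply (rule stepI[where ?e1.0="(l3, 0)" and ?e2.0="(l3, r1)"])
       subgoal using brd fr dist by simp
       apply (rule leafI[where S="R0 \<union> {(0, r2), (l1, r1), (l2, r3), (l3, 0)}"])
          apply (rule Hm) subgoal by (rule pm4) (use dist in auto)
         subgoal by blast
        apply (rule mono)
       apply (rule leafI[where S="R0 \<union> {(0, r2), (l1, 0), (l2, r3), (l3, r1)}"])
          apply (rule Hm) subgoal by (rule pm4) (use dist in auto)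
         subgoal by blast
        apply (rule mono)
      apply (rule stepI[where ?e1.0="(l2, 0)" and ?e2.0="(l2, r1)"])
       subgoal using brd fr dist by simp
       apply (rule leafI[where S="R0 \<union> {(0, r2), (l1, r1), (l2, 0), (l3, r3)}"])
          apply (rule Hm) subgoal by (rule pm4) (use dist in auto)
         subgoal by blast
        apply (rule mono)
       apply (rule leafI[where S="R0 \<union> {(0, r2), (l1, 0), (l2, r1), (l3, r3)}"])
          apply (rule Hm) subgoal by (rule pm4) (use dist in auto)
         subgoal by blast
        apply (rule mono)
     apply (rule stepI[where ?e1.0="(l2, r1)" and ?e2.0="(l3, r1)"])
      subgoal using brd fr dist by simp
      apply (rule stepI[where ?e1.0="(l3, 0)" and ?e2.0="(l3, r3)"])
       subgoal using brd fr dist by simp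
       apply (rule leafI[where S="R0 \<union> {(0, r2), (l1, r3), (l2, r1), (l3, 0)}"])
          apply (rule Hm) subgoal by (rule pm4) (use dist in auto)
         subgoal by blast
        apply (rule mono)
       apply (rule leafI[where S="R0 \<union> {(0, r2), (l1, 0), (l2, r1), (l3, r3)}"])
          apply (rule Hm) subgoal by (rule pm4) (use dist in auto)
         subgoal by blast
        apply (rule mono)
      apply (rule stepI[where ?e1.0="(l2, 0)" and ?e2.0="(l2, r3)"])
       subgoal using brd fr dist by simp
       apply (rule leafI[where S="R0 \<union> {(0, r2), (l1, r3), (l2, 0), (l3, r1)}"])
          apply (rule Hm) subgoal by (rule pm4) (use dist in auto)
         subgoal by blast
        apply (rule mono)
       apply (rule leafI[where S="R0 \<union> {(0, r2), (l1, 0), (l2, r3), (l3, r1)}"])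
          apply (rule Hm) subgoal by (rule pm4) (use dist in auto)
         subgoal by blast
        apply (rule mono)
  done


lemma pm_ext:
  assumes "x \<in> X" "y \<in> Y" "(x, y) \<noteq> (0, 0)" "pmXY (X - {x}) (Y - {y}) M"
  shows "pmXY X Y (insert (x, y) M)"
proof -
  have sub: "M \<subseteq> ((X - {x}) \<times> (Y - {y})) - {(0, 0)}" using assms(4) unfolding pmXY_def by blast
  have A: "\<forall>u\<in>X - {x}. \<exists>!v. (u, v) \<in> M" and B: "\<forall>v\<in>Y - {y}. \<exists>!u. (u, v) \<in> M"
    using assms(4) unfolding pmXY_def by blast+
  have "\<forall>u\<in>X. \<exists>!v. (u, v) \<in> insert (x, y) M"
  proof
    fix u assume u: "u \<in> X"
    show "\<exists>!v. (u, v) \<in> insert (x, y) M"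
    proof (cases "u = x")
      case True
      then show ?thesis using sub by auto
    next
      case False
      then have "u \<in> X - {x}" using u by blast
      then show ?thesis using A False by auto
    qed
  qed
  moreover have "\<forall>v\<in>Y. \<exists>!u. (u, v) \<in> insert (x, y) M"
  proof
    fix v assume v: "v \<in> Y"
    show "\<exists>!u. (u, v) \<in> insert (x, y) M"
    proof (cases "v = y")
      case True
      then show ?thesis using sub by auto
    next
      case False
      then have "v \<in> Y - {y}" using v by blast
      then show ?thesis using B False by auto
    qed
  qed
  ultimately show ?thesis using sub assms(1-3) unfolding pmXY_def by blast
qed

lemma gen:
  "finite X \<Longrightarrow> finite Y \<Longrightarrow> 0 \<in> X \<Longrightarrow> 0 \<in> Y \<Longrightarrow> card X = n + 4 \<Longrightarrow> card Y = n + 4 \<Longrightarrow>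
   \<forall>x\<in>X. \<forall>y\<in>Y. (x, y) \<noteq> (0, 0) \<longrightarrow> (x, y) \<in> board \<Longrightarrow>
   \<forall>x\<in>X. \<forall>y\<in>Y. (x, y) \<notin> R \<and> (x, y) \<notin> B \<Longrightarrow>
   \<forall>S T. S \<subseteq> T \<longrightarrow> goal S \<longrightarrow> goal T \<Longrightarrow>
   (\<And>M. pmXY X Y M \<Longrightarrow> goal (R \<union> M)) \<Longrightarrow>
   waiter_forces board goal (n + 5) R B"
proof (induction n arbitrary: X Y R B)
  case 0
  have "card (X - {0}) = 3" using 0(1,3,5) by simp
  then obtain l1 l2 l3 where l: "X - {0} = {l1, l2, l3}" "l1 \<noteq> l2" "l2 \<noteq> l3" "l1 \<noteq> l3"
    unfolding card_3_iff by blast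
  have "card (Y - {0}) = 3" using 0(2,4,6) by simp
  then obtain r1 r2 r3 where r: "Y - {0} = {r1, r2, r3}" "r1 \<noteq> r2" "r2 \<noteq> r3" "r1 \<noteq> r3"
    unfolding card_3_iff by blast
  have X: "X = {0, l1, l2, l3}" using l(1) 0(3) by blast
  have Y: "Y = {0, r1, r2, r3}" using r(1) 0(4) by blast
  have "l1 \<in> X - {0}" "l2 \<in> X - {0}" "l3 \<in> X - {0}" using l(1) by blast+
  then have d1: "distinct [0, l1, l2, l3]" using l(2-4) by auto
  have "r1 \<in> Y - {0}" "r2 \<in> Y - {0}" "r3 \<in> Y - {0}" using r(1) by blast+
  then have d2: "distinct [0, r1, r2, r3]" using r(2-4) by auto
  have "waiter_forces board goal (Suc (Suc (Suc (Suc (Suc 0))))) R B"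
    by (rule base[OF d1 d2 0(7)[unfolded X Y] 0(8)[unfolded X Y] 0(9) 0(10)[unfolded X Y]])
  then show ?case by (simp add: numeral_eq_Suc)
next
  case (Suc n)
  have "card (X - {0}) = n + 4" using Suc.prems(1,3,5) by simp
  then have "card (X - {0}) \<noteq> 0" by simp
  then have "X - {0} \<noteq> {}" by (metis card.empty)
  then obtain x where x: "x \<in> X" "x \<noteq> 0" by blast
  have c1: "card (Y - {0}) = n + 4" using Suc.prems(2,4,6) by simp
  then have "card (Y - {0}) \<noteq> 0" by simp
  then have "Y - {0} \<noteq> {}" by (metis card.empty)
  then obtain y1 where y1: "y1 \<in> Y" "y1 \<noteq> 0" by blast
  have "card (Y - {0} - {y1}) = n + 3" using c1 y1 by simp
  then have "card (Y - {0} - {y1}) \<noteq> 0" by simp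
  then have "Y - {0} - {y1} \<noteq> {}" by (metis card.empty)
  then obtain y2 where y2: "y2 \<in> Y" "y2 \<noteq> 0" "y2 \<noteq> y1" by blast
  have br: "waiter_forces board goal (n + 5) (insert (x, ya) R) (insert (x, yb) B)"
    if ya: "ya \<in> Y" "ya \<noteq> 0" for ya yb
  proof (rule Suc.IH[of "X - {x}" "Y - {ya}"])
    show "finite (X - {x})" "finite (Y - {ya})" using Suc.prems(1,2) by auto
    show "0 \<in> X - {x}" "0 \<in> Y - {ya}" using Suc.prems(3,4) x ya by auto
    show "card (X - {x}) = n + 4" "card (Y - {ya}) = n + 4" using Suc.prems(1,2,5,6) x ya by auto
    show "\<forall>u\<in>X - {x}. \<forall>v\<in>Y - {ya}. (u, v) \<noteq> (0, 0) \<longrightarrow> (u, v) \<in> board" using Suc.prems(7) by auto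
    show "\<forall>u\<in>X - {x}. \<forall>v\<in>Y - {ya}. (u, v) \<notin> insert (x, ya) R \<and> (u, v) \<notin> insert (x, yb) B"
      using Suc.prems(8) by auto
    show "\<forall>S T. S \<subseteq> T \<longrightarrow> goal S \<longrightarrow> goal T" using Suc.prems(9) by blast
    fix M assume "pmXY (X - {x}) (Y - {ya}) M"
    then have "pmXY X Y (insert (x, ya) M)" using pm_ext x ya by auto
    then have "goal (R \<union> insert (x, ya) M)" using Suc.prems(10) by blast
    then show "goal (insert (x, ya) R \<union> M)" by simp
  qed
  have "waiter_forces board goal (Suc (n + 5)) R B"
  proof (rule stepI[OF _ br[OF y1(1,2), of y2] br[OF y2(1,2), of y1]])
    show "(x, y1) \<in> board \<and> (x, y2) \<in> board \<and> (x, y1) \<noteq> (x, y2) \<and> (x, y1) \<notin> R \<and> (x, y1) \<notin> B \<and> (x, y2) \<notin> R \<and> (x, y2) \<notin> B"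
      using Suc.prems(7,8) x y1 y2 by auto
  qed
  then show ?case by simp
qed

theorem lemma3p3:
  fixes t :: nat
  assumes "t \<ge> 4"
  shows "waiter_forces (Ktt_minus t)
           (\<lambda>R. \<exists>M \<subseteq> R. perfect_matching t (Ktt_minus t) M)
           (t + 1) {} {}"
proof -
  have "waiter_forces (Ktt_minus t) (\<lambda>R. \<exists>M \<subseteq> R. perfect_matching t (Ktt_minus t) M) ((t - 4) + 5) {} {}"
  proof (rule gen[of "{..<t}" "{..<t}"])
    fix M assume "pmXY {..<t} {..<t} M"
    then have "perfect_matching t (Ktt_minus t) M"
      unfolding pmXY_def perfect_matching_def Ktt_minus_def by auto
    then show "\<exists>M' \<subseteq> {} \<union> M. perfect_matching t (Ktt_minus t) M'" by blast
  qed (use assms in \<open>auto simp: Ktt_minus_def\<close>)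
  moreover have "(t - 4) + 5 = t + 1" using assms by simp
  ultimately show ?thesis by simp
qed

end
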